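(* Let $(A,E)$ be a $B$-valued Banach noncommutative probability space, $a\in A$ with $E(a)$ invertible, $N\in\mathbb N$, and fix $i\in I$ in the Fock space setting below. Let $\alpha_0=E(a)$. Then there exist $\alpha_n\in\mathcal B_n(B)$, $n=1,\ldots,N$, such that with \[ X=\sum_{n=0}^N\big(V_{i,n}(\alpha_n)+W_{i,n}(\alpha_n)\big)\in\mathcal B(\mathcal F) \] one has $\mathcal E(b_0Xb_1X\cdots b_kX)=E(b_0ab_1a\cdots b_ka)$ for all $k\in\{1,\ldots,N\}$ and all $b_0,\ldots,b_k\in B$ (with $b_j$ acting on $\mathcal F$ as $\lambda(b_j)$).
   Context: A $B$-valued Banach noncommutative probability space is a pair $(A,E)$ where $A$ is a unital Banach algebra containing an isometric copy of the unital complex Banach algebra $B$ as a unital subalgebra and $E:A\to B$ is a bounded projection with $E(b_1ab_2)=b_1E(a)b_2$. Fock space setting: $I$ a set, $\mathbb N=\{1,2,\ldots\}$; $D=\ell^1(I,B)$ (functions $d:I\to B$ with $\sum_i\|d(i)\|<\infty$, left action $(bd)(i)=b\,d(i)$, $\delta_i$ the function $1$ at $i$, $0$ elsewhere); $\mathcal F=B\Omega\oplus\bigoplus_{k\ge1}D^{\hat\otimes k}\hat\otimes B$ ($\ell^1$-sum of projective tensor products, $\Omega$ the unit of the copy $B\Omega$ of $B$); $\lambda(b)$: $b_0\Omega\mapsto(bb_0)\Omega$, $d_1\otimes\cdots\otimes d_k\otimes b_0\mapsto(bd_1)\otimes\cdots\otimes d_k\otimes b_0$; $P$ the projection onto $B\Omega$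 killing other summands, $\mathcal E(X)=P(X\Omega)$; $L_i$: $b_0\Omega\mapsto\delta_i\otimes b_0$, $d_1\otimes\cdots\otimes b_0\mapsto\delta_i\otimes d_1\otimes\cdots\otimes b_0$. $\mathcal B_n(B)$ = bounded multilinear maps $B^n\to B$, $\mathcal B_0(B)=B$. For $n\ge1$, $V_{i,n}(\alpha_n)$, $W_{i,n}(\alpha_n)$ vanish on $B\Omega$ and on $d_1\otimes\cdots\otimes d_k\otimes b_0$ with $k<n$; for $k=n$ they give $\alpha_n(d_1(i),\ldots,d_n(i))b_0\Omega$ resp. $\alpha_n(d_1(i),\ldots,d_n(i))\delta_i\otimes b_0$; for $k>n$ they give $\alpha_n(d_1(i),\ldots,d_n(i))d_{n+1}\otimes\cdots\otimes d_k\otimes b_0$ resp. $\alpha_n(d_1(i),\ldots,d_n(i))\delta_i\otimes d_{n+1}\otimes\cdots\otimes d_k\otimes b_0$. $V_{i,0}(\alpha_0)=\lambda(\alpha_0)$, $W_{i,0}(\alpha_0)=\lambda(\alpha_0)L_i$. *)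

theory Defs
  imports "HOL-Analysis.Analysis"
begin

text \<open>Isabelle/HOL has no class of complex vector spaces.  A complex unital Banach
algebra is modelled as a real unital Banach algebra together with the element
j = i*1, which is central, squares to -1 and for which multiplication by
unimodular complex scalars cos t + j sin t is isometric.  Complex scalar
multiplication is then (x + iy) b = x b + y (j b).\<close>

definition complex_structure :: "'b::{real_normed_algebra_1,banach} \<Rightarrow> bool" where
  "complex_structure j \<longleftrightarrow> j * j = - 1 \<and> (\<forall>x. j * x = x * j) \<and>
     (\<forall>t x. norm (cos t *\<^sub>R x + sin t *\<^sub>R (j * x)) = norm x)"

text \<open>B-valued Banach noncommutative probability space (A,E): iota is the isometric
unital embedding of B into A, E a bounded B-bimodule projection onto B.\<close>

definition banach_ncps ::
  "'b::{real_normed_algebra_1,banach} \<Rightarrow> ('b \<Rightarrow> 'a::{real_normed_algebra_1,banach}) \<Rightarrow> ('a \<Rightarrow> 'b) \<Rightarrow> bool" where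
  "banach_ncps j \<iota> E \<longleftrightarrow>
     complex_structure j \<and> complex_structure (\<iota> j) \<and>
     bounded_linear \<iota> \<and> (\<forall>x y. \<iota> (x * y) = \<iota> x * \<iota> y) \<and> \<iota> 1 = 1 \<and>
     (\<forall>b. norm (\<iota> b) = norm b) \<and>
     bounded_linear E \<and> (\<forall>b. E (\<iota> b) = b) \<and>
     (\<forall>b1 x b2. E (\<iota> b1 * x * \<iota> b2) = b1 * E x * b2)"

definition invertible_elem :: "'b::ring_1 \<Rightarrow> bool" where
  "invertible_elem x \<longleftrightarrow> (\<exists>y. x * y = 1 \<and> y * x = 1)"

text \<open>Bounded (complex) multilinear maps B^n \<rightarrow> B, represented as functions on
lists of length n.\<close>

definition bounded_multilinear_map ::
  "'b::{real_normed_algebra_1,banach} \<Rightarrow> nat \<Rightarrow> ('b list \<Rightarrow> 'b) \<Rightarrow> bool" where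
  "bounded_multilinear_map j n f \<longleftrightarrow>
     (\<forall>xs k x y. length xs = n \<and> k < n \<longrightarrow>
        f (xs[k := x + y]) = f (xs[k := x]) + f (xs[k := y])) \<and>
     (\<forall>xs k x c. length xs = n \<and> k < n \<longrightarrow>
        f (xs[k := c *\<^sub>R x]) = c *\<^sub>R f (xs[k := x])) \<and>
     (\<forall>xs k x. length xs = n \<and> k < n \<longrightarrow>
        f (xs[k := j * x]) = j * f (xs[k := x])) \<and>
     (\<exists>K. \<forall>xs. length xs = n \<longrightarrow> norm (f xs) \<le> K * prod_list (map norm xs))"

text \<open>An elementary tensor d_1 \<otimes> ... \<otimes> d_k \<otimes> b_0 (k \<ge> 0; k = 0 is b_0 \<Omega>)
is a pair (ds, b0) with ds :: ('i \<Rightarrow> 'b) list the elements of D = l^1(I,B).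
A Fock vector is a finite formal sum of elementary tensors (a list); the
empty list is 0.  Operators are given on elementary tensors and extended
additively.\<close>

type_synonym ('i,'b) ftensor = "('i \<Rightarrow> 'b) list \<times> 'b"
type_synonym ('i,'b) fvec = "('i,'b) ftensor list"

definition delta :: "'i \<Rightarrow> 'i \<Rightarrow> 'b::zero_neq_one" where
  "delta i = (\<lambda>j. if j = i then 1 else 0)"

definition lmulD :: "'b::times \<Rightarrow> ('i \<Rightarrow> 'b) \<Rightarrow> ('i \<Rightarrow> 'b)" where
  "lmulD b d = (\<lambda>j. b * d j)"

definition Omega :: "('i,'b::one) fvec" where
  "Omega = [([], 1)]"

definition opapp :: "(('i,'b) ftensor \<Rightarrow> ('i,'b) fvec) \<Rightarrow> ('i,'b) fvec \<Rightarrow> ('i,'b) fvec" where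
  "opapp T v = concat (map T v)"

fun lamT :: "'b::times \<Rightarrow> ('i,'b) ftensor \<Rightarrow> ('i,'b) fvec" where
  "lamT b ([], b0) = [([], b * b0)]"
| "lamT b (d # ds, b0) = [(lmulD b d # ds, b0)]"

definition LT :: "'i \<Rightarrow> ('i,'b::zero_neq_one) ftensor \<Rightarrow> ('i,'b) fvec" where
  "LT i t = [(delta i # fst t, snd t)]"

definition VT :: "'i \<Rightarrow> nat \<Rightarrow> ('b::ring_1 list \<Rightarrow> 'b) \<Rightarrow> ('i,'b) ftensor \<Rightarrow> ('i,'b) fvec" where
  "VT i n \<alpha> t =
    (if n = 0 then lamT (\<alpha> []) t
     else (let ds = fst t; b0 = snd t; k = length ds;
               c = \<alpha> (map (\<lambda>d. d i) (take n ds)) in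
       if k < n then []
       else if k = n then [([], c * b0)]
       else [(lmulD c (ds ! n) # drop (Suc n) ds, b0)]))"

definition WT :: "'i \<Rightarrow> nat \<Rightarrow> ('b::ring_1 list \<Rightarrow> 'b) \<Rightarrow> ('i,'b) ftensor \<Rightarrow> ('i,'b) fvec" where
  "WT i n \<alpha> t =
    (if n = 0 then opapp (lamT (\<alpha> [])) (LT i t)
     else (let ds = fst t; b0 = snd t; k = length ds;
               c = \<alpha> (map (\<lambda>d. d i) (take n ds)) in
       if k < n then []
       else [(lmulD c (delta i) # drop n ds, b0)]))"

definition XT :: "'i \<Rightarrow> nat \<Rightarrow> (nat \<Rightarrow> 'b::ring_1 list \<Rightarrow> 'b) \<Rightarrow> ('i,'b) ftensor \<Rightarrow> ('i,'b) fvec" where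
  "XT i N \<alpha> t = concat (map (\<lambda>n. VT i n (\<alpha> n) t @ WT i n (\<alpha> n) t) [0..<Suc N])"

definition fockP :: "('i,'b::ring_1) fvec \<Rightarrow> 'b" where
  "fockP v = sum_list (map snd (filter (\<lambda>t. fst t = []) v))"

definition fock_word :: "'i \<Rightarrow> nat \<Rightarrow> (nat \<Rightarrow> 'b::ring_1 list \<Rightarrow> 'b) \<Rightarrow> 'b list \<Rightarrow> ('i,'b) fvec" where
  "fock_word i N \<alpha> bs = foldr (\<lambda>b v. opapp (lamT b) (opapp (XT i N \<alpha>) v)) bs Omega"

definition fockE_word :: "'i \<Rightarrow> nat \<Rightarrow> (nat \<Rightarrow> 'b::ring_1 list \<Rightarrow> 'b) \<Rightarrow> 'b list \<Rightarrow> 'b" where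
  "fockE_word i N \<alpha> bs = fockP (fock_word i N \<alpha> bs)"

definition alg_word :: "('b \<Rightarrow> 'a::ring_1) \<Rightarrow> 'a \<Rightarrow> 'b list \<Rightarrow> 'a" where
  "alg_word \<iota> a bs = foldr (\<lambda>b y. \<iota> b * a * y) bs 1"

end

theory Submission
  imports Defs
begin


definition sV :: "('b::ring_1 list \<Rightarrow> 'b) \<Rightarrow> nat \<Rightarrow> 'b \<Rightarrow> 'b \<Rightarrow> 'b list \<Rightarrow> 'b \<Rightarrow> ('b list \<times> 'b) option" where
"sV am m a0 b cs b0 = (if m = 0 then Some (case cs of [] \<Rightarrow> ([], b*(a0*b0)) | c#cs' \<Rightarrow> (b*(a0*c)#cs', b0))
  else if length cs < m then None
  else if length cs = m then Some ([], b*(am (take m cs)*b0))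
  else Some (b*(am (take m cs) * cs!m) # drop (Suc m) cs, b0))"

definition sW :: "('b::ring_1 list \<Rightarrow> 'b) \<Rightarrow> nat \<Rightarrow> 'b \<Rightarrow> 'b \<Rightarrow> 'b list \<Rightarrow> 'b \<Rightarrow> ('b list \<times> 'b) option" where
"sW am m a0 b cs b0 = (if m = 0 then Some (b*a0 # cs, b0)
  else if length cs < m then None
  else Some (b*am (take m cs) # drop m cs, b0))"

definition ov :: "('s \<Rightarrow> 'b::zero) \<Rightarrow> 's option \<Rightarrow> 'b" where
"ov f x = (case x of None \<Rightarrow> 0 | Some s \<Rightarrow> f s)"

primrec Val :: "(nat \<Rightarrow> 'b::ring_1 list \<Rightarrow> 'b) \<Rightarrow> nat \<Rightarrow> 'b list \<Rightarrow> 'b list \<times> 'b \<Rightarrow> 'b" where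
"Val \<alpha> N [] s = (if fst s = [] then snd s else 0)"
| "Val \<alpha> N (b#w) s = (\<Sum>m<Suc N. ov (Val \<alpha> N w) (sV (\<alpha> m) m (\<alpha> 0 []) b (fst s) (snd s))
                                 + ov (Val \<alpha> N w) (sW (\<alpha> m) m (\<alpha> 0 []) b (fst s) (snd s)))"

definition absT :: "'i \<Rightarrow> ('i,'b) ftensor \<Rightarrow> 'b list \<times> 'b" where
"absT i t = (map (\<lambda>d. d i) (fst t), snd t)"

lemma sum_list_filter_if: "sum_list (map f (filter P xs)) = sum_list (map (\<lambda>x. if P x then f x else (0::'c::monoid_add)) xs)"
  by (induct xs) auto

lemma sum_list_concat_map: "sum_list (map f (concat xss)) = sum_list (map (\<lambda>xs. sum_list (map f xs)) xss)"
  by (induct xss) auto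

lemma opapp_append: "opapp T (u @ v) = opapp T u @ opapp T v"
  by (simp add: opapp_def)

lemma opapp_concat: "opapp T (concat xss) = concat (map (opapp T) xss)"
  by (induct xss) (auto simp: opapp_append opapp_def)

lemma bridge_step:
  fixes \<alpha> :: "nat \<Rightarrow> 'b::ring_1 list \<Rightarrow> 'b"
  shows "sum_list (map (\<lambda>t'. Val \<alpha> N w (absT i t')) (opapp (lamT b) (XT i N \<alpha> t)))
     = Val \<alpha> N (b#w) (absT i t)"
proof -
  obtain ds b0 where t: "t = (ds, b0)" by (cases t)
  have V: "sum_list (map (\<lambda>t'. Val \<alpha> N w (absT i t')) (opapp (lamT b) (VT i m (\<alpha> m) t)))
      = ov (Val \<alpha> N w) (sV (\<alpha> m) m (\<alpha> 0 []) b (fst (absT i t)) (snd (absT i t)))" for m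
  proof (cases "m = 0")
    case True
    then show ?thesis by (cases ds) (auto simp: t VT_def sV_def ov_def absT_def opapp_def lmulD_def)
  next
    case False
    then show ?thesis
      by (auto simp: t VT_def sV_def ov_def absT_def opapp_def lmulD_def Let_def take_map drop_map
        not_less mult.assoc)
  qed
  have W: "sum_list (map (\<lambda>t'. Val \<alpha> N w (absT i t')) (opapp (lamT b) (WT i m (\<alpha> m) t)))
      = ov (Val \<alpha> N w) (sW (\<alpha> m) m (\<alpha> 0 []) b (fst (absT i t)) (snd (absT i t)))" for m
    by (cases "m = 0") (auto simp: t WT_def LT_def sW_def ov_def absT_def opapp_def lmulD_def Let_def take_map drop_map
        delta_def not_less)
  have "opapp (lamT b) (XT i N \<alpha> t) = concat (map (\<lambda>m. opapp (lamT b) (VT i m (\<alpha> m) t) @ opapp (lamT b) (WT i m (\<alpha> m) t)) [0..<Suc N])"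
    by (simp add: XT_def opapp_concat o_def opapp_append)
  then have "sum_list (map (\<lambda>t'. Val \<alpha> N w (absT i t')) (opapp (lamT b) (XT i N \<alpha> t)))
     = sum_list (map (\<lambda>m. ov (Val \<alpha> N w) (sV (\<alpha> m) m (\<alpha> 0 []) b (fst (absT i t)) (snd (absT i t)))
           + ov (Val \<alpha> N w) (sW (\<alpha> m) m (\<alpha> 0 []) b (fst (absT i t)) (snd (absT i t)))) [0..<Suc N])"
    by (simp add: sum_list_concat_map V W o_def)
  also have "\<dots> = Val \<alpha> N (b#w) (absT i t)"
    by (simp add: interv_sum_list_conv_sum_set_nat lessThan_atLeast0)
  finally show ?thesis .
qed

lemma bridge_gen:
  fixes \<alpha> :: "nat \<Rightarrow> 'b::ring_1 list \<Rightarrow> 'b"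
  shows "fockP (foldr (\<lambda>b v. opapp (lamT b) (opapp (XT i N \<alpha>) v)) bs v)
     = sum_list (map (\<lambda>t. Val \<alpha> N (rev bs) (absT i t)) v)"
proof (induct bs arbitrary: v rule: rev_induct)
  case Nil
  show ?case unfolding fockP_def sum_list_filter_if
    by (rule arg_cong[where f=sum_list], rule map_cong) (auto simp: absT_def)
next
  case (snoc b bs)
  have "fockP (foldr (\<lambda>b v. opapp (lamT b) (opapp (XT i N \<alpha>) v)) (bs @ [b]) v)
     = sum_list (map (\<lambda>t. Val \<alpha> N (rev bs) (absT i t)) (opapp (lamT b) (opapp (XT i N \<alpha>) v)))"
    using snoc by simp
  also have "\<dots> = sum_list (map (\<lambda>t. sum_list (map (\<lambda>t'. Val \<alpha> N (rev bs) (absT i t')) (opapp (lamT b) (XT i N \<alpha> t)))) v)"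
  proof -
    have "opapp (lamT b) (opapp (XT i N \<alpha>) v) = concat (map (\<lambda>t. opapp (lamT b) (XT i N \<alpha> t)) v)"
      by (simp add: opapp_concat opapp_def[of "XT i N \<alpha>"] o_def)
    then show ?thesis by (simp add: sum_list_concat_map o_def)
  qed
  also have "\<dots> = sum_list (map (\<lambda>t. Val \<alpha> N (rev (bs @ [b])) (absT i t)) v)"
    by (simp add: bridge_step)
  finally show ?case .
qed

lemma bridge:
  fixes \<alpha> :: "nat \<Rightarrow> 'b::ring_1 list \<Rightarrow> 'b"
  shows "fockE_word i N \<alpha> bs = Val \<alpha> N (rev bs) ([], 1)"
  by (simp add: fockE_word_def fock_word_def bridge_gen Omega_def absT_def)




lemma Val_mult:
  fixes \<alpha> :: "nat \<Rightarrow> 'b::ring_1 list \<Rightarrow> 'b"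
  shows "Val \<alpha> N w (cs, x * y) = Val \<alpha> N w (cs, x) * y"
proof (induct w arbitrary: cs x y)
  case Nil
  then show ?case by simp
next
  case (Cons b w)
  have "ov (Val \<alpha> N w) (sV am m a0 b cs (x*y)) = ov (Val \<alpha> N w) (sV am m a0 b cs x) * y"
    "ov (Val \<alpha> N w) (sW am m a0 b cs (x*y)) = ov (Val \<alpha> N w) (sW am m a0 b cs x) * y" for am m a0
    by (cases cs; auto simp: sV_def sW_def ov_def Cons mult.assoc)+
  then show ?case by (simp add: sum_distrib_right distrib_right)
qed

lemma Val_b0:
  fixes \<alpha> :: "nat \<Rightarrow> 'b::ring_1 list \<Rightarrow> 'b"
  shows "Val \<alpha> N w (cs, b0) = Val \<alpha> N w (cs, 1) * b0"
  using Val_mult[of \<alpha> N w cs 1 b0] by simp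

lemma ov_lmult: "ov (\<lambda>s. c * f s) x = (c::'b::ring_1) * ov f x"
  by (cases x) (auto simp: ov_def)

lemma Val_last:
  fixes \<alpha> :: "nat \<Rightarrow> 'b::ring_1 list \<Rightarrow> 'b"
  shows "Val \<alpha> N (w @ [b]) s = b * Val \<alpha> N (w @ [1]) s"
proof (induct w arbitrary: s)
  case Nil
  have "ov (Val \<alpha> N []) (sV am m a0 b cs b0) = b * ov (Val \<alpha> N []) (sV am m a0 1 cs b0)"
    "ov (Val \<alpha> N []) (sW am m a0 b cs b0) = b * ov (Val \<alpha> N []) (sW am m a0 1 cs b0)" for am m a0 cs b0
    by (cases cs; auto simp: sV_def sW_def ov_def)+
  then show ?case by (simp add: sum_distrib_left distrib_left)
next
  case (Cons b' w)
  have e: "Val \<alpha> N (w @ [b]) = (\<lambda>s. b * Val \<alpha> N (w @ [1]) s)" using Cons by auto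
  show ?case by (simp add: e ov_lmult sum_distrib_left distrib_left)
qed

definition clin :: "'b::real_normed_algebra_1 \<Rightarrow> ('b \<Rightarrow> 'b) \<Rightarrow> bool" where
"clin j f \<longleftrightarrow> (\<forall>x y. f (x+y) = f x + f y) \<and> (\<forall>c x. f (c *\<^sub>R x) = c *\<^sub>R f x) \<and> (\<forall>x. f (j*x) = j * f x)"

lemma clin_0: "clin j (\<lambda>x. 0)" by (simp add: clin_def)
lemma clin_id: "clin j (\<lambda>x. x)" by (simp add: clin_def)
lemma clin_comp: "clin j f \<Longrightarrow> clin j g \<Longrightarrow> clin j (\<lambda>x. f (g x))" by (simp add: clin_def)
lemma clin_lmult: "(\<forall>x. j*x = x*j) \<Longrightarrow> clin j (\<lambda>x. c * x)"
  by (simp add: clin_def distrib_left) (metis mult.assoc)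
lemma clin_rmult: "clin j (\<lambda>x. x * c)"
  by (simp add: clin_def distrib_right mult.assoc)
lemma clin_add: "clin j f \<Longrightarrow> clin j g \<Longrightarrow> clin j (\<lambda>x. f x + g x)"
  by (simp add: clin_def distrib_left scaleR_add_right algebra_simps)
lemma clin_sum: "(\<And>m. m \<in> A \<Longrightarrow> clin j (f m)) \<Longrightarrow> clin j (\<lambda>x. \<Sum>m\<in>A. f m x)"
  by (simp add: clin_def sum.distrib scaleR_sum_right sum_distrib_left)

lemma clin_lr: "(\<forall>x. j*x = x*j) \<Longrightarrow> clin j g \<Longrightarrow> clin j (\<lambda>x. c * (g x * d))"
  using clin_comp[OF clin_lmult clin_comp[OF clin_rmult]] by blast
lemma clin_l: "(\<forall>x. j*x = x*j) \<Longrightarrow> clin j g \<Longrightarrow> clin j (\<lambda>x. c * g x)"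
  using clin_comp[OF clin_lmult] by blast
lemma clin_r: "clin j g \<Longrightarrow> clin j (\<lambda>x. g x * d)"
  using clin_comp[OF clin_rmult] by blast

lemma bml_clin: "bounded_multilinear_map j m f \<Longrightarrow> length xs = m \<Longrightarrow> k < m \<Longrightarrow> clin j (\<lambda>x. f (xs[k := x]))"
  by (simp add: bounded_multilinear_map_def clin_def)

lemma bml_clin_comp: "bounded_multilinear_map j m f \<Longrightarrow> length xs = m \<Longrightarrow> k < m \<Longrightarrow> clin j g \<Longrightarrow> clin j (\<lambda>x. f (xs[k := g x]))"
  using clin_comp[OF bml_clin] by blast

lemma Val_clin_b0:
  fixes \<alpha> :: "nat \<Rightarrow> 'b::real_normed_algebra_1 list \<Rightarrow> 'b"
  assumes "\<forall>x. j*x = x*j" "clin j g"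
  shows "clin j (\<lambda>x. Val \<alpha> N w (cs, g x))"
  by (subst Val_b0) (rule clin_l[OF assms])




lemma clin_sV_cs:
  fixes F :: "'b::{real_normed_algebra_1,banach} list \<times> 'b \<Rightarrow> 'b"
  assumes IH: "\<And>cs k b0 g. k < length cs \<Longrightarrow> clin j g \<Longrightarrow> clin j (\<lambda>x. F (cs[k := g x], b0))"
    and Cb: "\<And>cs g. clin j g \<Longrightarrow> clin j (\<lambda>x. F (cs, g x))"
    and jc: "\<forall>x. j*x = x*j"
    and ml: "m \<noteq> 0 \<Longrightarrow> bounded_multilinear_map j m am"
    and k: "k < length cs" and g: "clin j g"
  shows "clin j (\<lambda>x. ov F (sV am m a0 b (cs[k:=g x]) b0))"
proof (cases "m = 0")
  case True
  obtain c cs' where cs: "cs = c # cs'" using k by (cases cs) auto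
  show ?thesis
  proof (cases k)
    case 0
    have e: "(\<lambda>x. ov F (sV am m a0 b (cs[k:=g x]) b0)) = (\<lambda>x. F (cs[0 := b*(a0*g x)], b0))"
      by (rule ext) (simp add: True cs 0 sV_def ov_def)
    show ?thesis unfolding e by (rule IH) (auto simp: cs intro: clin_l[OF jc] clin_l[OF jc g])
  next
    case (Suc k')
    have e: "(\<lambda>x. ov F (sV am m a0 b (cs[k:=g x]) b0)) = (\<lambda>x. F ((b*(a0*c) # cs')[k := g x], b0))"
      by (rule ext) (simp add: True cs Suc sV_def ov_def)
    show ?thesis unfolding e by (rule IH) (use k g in \<open>auto simp: cs\<close>)
  qed
next
  case False
  note ml = ml[OF False]
  consider "length cs < m" | "length cs = m" | "length cs > m" by linarith
  then show ?thesis
  proof cases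
    case 1
    then show ?thesis by (simp add: sV_def ov_def clin_0)
  next
    case 2
    have e: "(\<lambda>x. ov F (sV am m a0 b (cs[k:=g x]) b0)) = (\<lambda>x. F ([], b*(am (cs[k:=g x])*b0)))"
      by (rule ext) (simp add: False 2 sV_def ov_def)
    show ?thesis unfolding e
      by (rule Cb, rule clin_l[OF jc], rule clin_r, rule bml_clin_comp[OF ml]) (use 2 k g in auto)
  next
    case 3
    consider "k < m" | "k = m" | "k > m" by linarith
    then show ?thesis
    proof cases
      case 1
      have e: "(\<lambda>x. ov F (sV am m a0 b (cs[k:=g x]) b0)) =
         (\<lambda>x. F ((0 # drop (Suc m) cs)[0 := b*(am ((take m cs)[k:=g x])*cs!m)], b0))"
        using 1 3 by (intro ext) (simp add: False sV_def ov_def take_update_swap)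
      show ?thesis unfolding e
        by (rule IH, simp, rule clin_l[OF jc], rule clin_r, rule bml_clin_comp[OF ml]) (use 1 3 k g in auto)
    next
      case 2
      have e: "(\<lambda>x. ov F (sV am m a0 b (cs[k:=g x]) b0)) =
         (\<lambda>x. F ((0 # drop (Suc m) cs)[0 := b*(am (take m cs)*g x)], b0))"
        using 2 3 by (intro ext) (simp add: False sV_def ov_def)
      show ?thesis unfolding e
        by (rule IH, simp, rule clin_l[OF jc], rule clin_l[OF jc g])
    next
      case 4: 3
      have e: "(\<lambda>x. ov F (sV am m a0 b (cs[k:=g x]) b0)) =
         (\<lambda>x. F ((b*(am (take m cs)*cs!m) # drop (Suc m) cs)[Suc (k - Suc m) := g x], b0))"
        using 4 3 by (intro ext) (simp add: False sV_def ov_def drop_update_swap)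
      show ?thesis unfolding e
        by (rule IH) (use 4 3 k g in auto)
    qed
  qed
qed

lemma clin_sW_cs:
  fixes F :: "'b::{real_normed_algebra_1,banach} list \<times> 'b \<Rightarrow> 'b"
  assumes IH: "\<And>cs k b0 g. k < length cs \<Longrightarrow> clin j g \<Longrightarrow> clin j (\<lambda>x. F (cs[k := g x], b0))"
    and jc: "\<forall>x. j*x = x*j"
    and ml: "m \<noteq> 0 \<Longrightarrow> bounded_multilinear_map j m am"
    and k: "k < length cs" and g: "clin j g"
  shows "clin j (\<lambda>x. ov F (sW am m a0 b (cs[k:=g x]) b0))"
proof (cases "m = 0")
  case True
  have e: "(\<lambda>x. ov F (sW am m a0 b (cs[k:=g x]) b0)) = (\<lambda>x. F ((b*a0 # cs)[Suc k := g x], b0))"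
    by (rule ext) (simp add: True sW_def ov_def)
  show ?thesis unfolding e by (rule IH) (use k g in auto)
next
  case False
  note ml = ml[OF False]
  consider "length cs < m" | "k < m" "m \<le> length cs" | "m \<le> k" by linarith
  then show ?thesis
  proof cases
    case 1
    then show ?thesis by (simp add: sW_def ov_def clin_0)
  next
    case 2
    have e: "(\<lambda>x. ov F (sW am m a0 b (cs[k:=g x]) b0)) =
       (\<lambda>x. F ((0 # drop m cs)[0 := b*am ((take m cs)[k:=g x])], b0))"
      using 2 by (intro ext) (simp add: False sW_def ov_def take_update_swap)
    show ?thesis unfolding e
      by (rule IH, simp, rule clin_l[OF jc], rule bml_clin_comp[OF ml]) (use 2 k g in auto)
  next
    case 3
    have e: "(\<lambda>x. ov F (sW am m a0 b (cs[k:=g x]) b0)) =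
       (\<lambda>x. F ((b*am (take m cs) # drop m cs)[Suc (k - m) := g x], b0))"
      using 3 k by (intro ext) (simp add: False sW_def ov_def drop_update_swap)
    show ?thesis unfolding e
      by (rule IH) (use 3 k g in auto)
  qed
qed

lemma Val_clin_cs:
  fixes \<alpha> :: "nat \<Rightarrow> 'b::{real_normed_algebra_1,banach} list \<Rightarrow> 'b"
  assumes jc: "\<forall>x. j*x = x*j"
    and ml: "\<forall>m. 1 \<le> m \<and> m \<le> N \<longrightarrow> bounded_multilinear_map j m (\<alpha> m)"
  shows "k < length cs \<Longrightarrow> clin j g \<Longrightarrow> clin j (\<lambda>x. Val \<alpha> N w (cs[k := g x], b0))"
proof (induct w arbitrary: cs k b0 g)
  case Nil
  have "(\<lambda>x. Val \<alpha> N [] (cs[k := g x], b0)) = (\<lambda>x. 0)"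
    using Nil by (intro ext) (cases cs, auto split: nat.splits)
  then show ?case by (simp add: clin_0)
next
  case (Cons b w)
  have Cb: "\<And>cs g. clin j g \<Longrightarrow> clin j (\<lambda>x. Val \<alpha> N w (cs, g x))"
    by (rule Val_clin_b0[OF jc])
  show ?case
    apply (simp only: Val.simps fst_conv snd_conv)
    apply (rule clin_sum)
    apply (rule clin_add)
     apply (rule clin_sV_cs[where F="Val \<alpha> N w"])
    using Cons(1) apply blast
    using Cb apply blast
    using jc apply blast
    using ml apply force
    using Cons(2,3) apply blast
    using Cons(2,3) apply blast
    apply (rule clin_sW_cs[where F="Val \<alpha> N w"])
    using Cons(1) apply blast
    using jc apply blast
    using ml apply force
    using Cons(2,3) apply blast
    using Cons(2,3) apply blast
    done
qed

lemma Val_clin_cs0: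
  fixes \<alpha> :: "nat \<Rightarrow> 'b::{real_normed_algebra_1,banach} list \<Rightarrow> 'b"
  assumes jc: "\<forall>x. j*x = x*j"
    and ml: "\<forall>m. 1 \<le> m \<and> m \<le> N \<longrightarrow> bounded_multilinear_map j m (\<alpha> m)"
    and g: "clin j g"
  shows "clin j (\<lambda>x. Val \<alpha> N w (g x # cs, b0))"
  using Val_clin_cs[OF jc ml, of 0 "0#cs" g w b0] g by simp




lemma clin_sV_b:
  fixes F :: "'b::{real_normed_algebra_1,banach} list \<times> 'b \<Rightarrow> 'b"
  assumes C0: "\<And>h cs b0. clin j h \<Longrightarrow> clin j (\<lambda>x. F (h x # cs, b0))"
    and Cb: "\<And>cs h. clin j h \<Longrightarrow> clin j (\<lambda>x. F (cs, h x))"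
    and g: "clin j g"
  shows "clin j (\<lambda>x. ov F (sV am m a0 (g x) cs b0))"
proof -
  consider "m = 0" "cs = []" | c cs' where "m = 0" "cs = c # cs'" | "m \<noteq> 0" "length cs < m"
    | "m \<noteq> 0" "length cs = m" | "m \<noteq> 0" "length cs > m"
    by (cases cs) force+
  then show ?thesis
  proof cases
    case 1 then show ?thesis by (simp add: sV_def ov_def Cb clin_r g)
  next
    case 2 then show ?thesis by (simp add: sV_def ov_def C0 clin_r g)
  next
    case 3 then show ?thesis by (simp add: sV_def ov_def clin_0)
  next
    case 4 then show ?thesis by (simp add: sV_def ov_def Cb clin_r g)
  next
    case 5 then show ?thesis by (simp add: sV_def ov_def C0 clin_r g)
  qed
qed

lemma clin_sW_b:
  fixes F :: "'b::{real_normed_algebra_1,banach} list \<times> 'b \<Rightarrow> 'b"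
  assumes C0: "\<And>h cs b0. clin j h \<Longrightarrow> clin j (\<lambda>x. F (h x # cs, b0))"
    and g: "clin j g"
  shows "clin j (\<lambda>x. ov F (sW am m a0 (g x) cs b0))"
proof -
  consider "m = 0" | "m \<noteq> 0" "length cs < m" | "m \<noteq> 0" "length cs \<ge> m"
    by force
  then show ?thesis
  proof cases
    case 1 then show ?thesis by (simp add: sW_def ov_def C0 clin_r g)
  next
    case 2 then show ?thesis by (simp add: sW_def ov_def clin_0)
  next
    case 3 then show ?thesis by (simp add: sW_def ov_def C0 clin_r g)
  qed
qed

lemma clin_ov_const:
  assumes "\<And>s. clin j (\<lambda>x. F x s)"
  shows "clin j (\<lambda>x. ov (F x) S)"
  using assms by (cases S) (auto simp: ov_def clin_0)

lemma Val_clin_w: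
  fixes \<alpha> :: "nat \<Rightarrow> 'b::{real_normed_algebra_1,banach} list \<Rightarrow> 'b"
  assumes jc: "\<forall>x. j*x = x*j"
    and ml: "\<forall>m. 1 \<le> m \<and> m \<le> N \<longrightarrow> bounded_multilinear_map j m (\<alpha> m)"
  shows "k < length w \<Longrightarrow> clin j g \<Longrightarrow> clin j (\<lambda>x. Val \<alpha> N (w[k := g x]) (cs, b0))"
proof (induct w arbitrary: k cs b0)
  case Nil
  then show ?case by simp
next
  case (Cons b w)
  show ?case
  proof (cases k)
    case 0
    have C0: "\<And>h cs b0. clin j h \<Longrightarrow> clin j (\<lambda>x. Val \<alpha> N w (h x # cs, b0))"
      by (rule Val_clin_cs0[OF jc ml])
    have Cb: "\<And>cs h. clin j h \<Longrightarrow> clin j (\<lambda>x. Val \<alpha> N w (cs, h x))"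
      by (rule Val_clin_b0[OF jc])
    show ?thesis
      apply (simp only: 0 list_update_code Val.simps fst_conv snd_conv)
      apply (rule clin_sum)
      apply (rule clin_add)
       apply (rule clin_sV_b[where F="Val \<alpha> N w", OF C0 Cb Cons(3)], assumption+)
      apply (rule clin_sW_b[where F="Val \<alpha> N w", OF C0 Cons(3)], assumption+)
      done
  next
    case (Suc k')
    have IH: "\<And>s. clin j (\<lambda>x. Val \<alpha> N (w[k' := g x]) s)"
      using Cons Suc by (metis length_Cons not_less_eq prod.collapse)
    show ?thesis
      apply (simp only: Suc list_update_code Val.simps fst_conv snd_conv)
      apply (rule clin_sum)
      apply (rule clin_add)
       apply (rule clin_ov_const[where F="\<lambda>x. Val \<alpha> N (w[k' := g x])", OF IH])
      apply (rule clin_ov_const[where F="\<lambda>x. Val \<alpha> N (w[k' := g x])", OF IH])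
      done
  qed
qed




definition pn :: "'b::real_normed_vector list \<Rightarrow> real" where
"pn xs = prod_list (map norm xs)"

lemma pn_simps[simp]: "pn [] = 1" "pn (x#xs) = norm x * pn xs"
  by (auto simp: pn_def)
lemma pn_nonneg: "0 \<le> pn xs"
  by (induct xs) auto
lemma pn_take_drop: "pn (take m cs) * pn (drop m cs) = pn cs"
  by (metis append_take_drop_id pn_def map_append prod_list.append)
lemma pn_drop_Suc: "m < length cs \<Longrightarrow> pn (drop m cs) = norm (cs!m) * pn (drop (Suc m) cs)"
  by (simp add: Cons_nth_drop_Suc[symmetric])
lemma pn_rev: "pn (rev xs) = pn xs"
  by (simp add: pn_def rev_map[symmetric] prod_list.rev)

lemma nm2: "norm (b*(x*y)) \<le> norm b * (norm x * norm (y::'b::real_normed_algebra_1))"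
  by (meson mult_left_mono norm_ge_zero norm_mult_ineq order_trans)

lemma grow_sV:
  fixes am :: "'b::real_normed_algebra_1 list \<Rightarrow> 'b"
  assumes A: "0 \<le> A" "norm a0 \<le> A" "m \<noteq> 0 \<Longrightarrow> \<forall>xs. length xs = m \<longrightarrow> norm (am xs) \<le> A * pn xs"
    and S: "sV am m a0 b cs b0 = Some (cs2, b2)"
  shows "length cs2 \<le> Suc (length cs) \<and> pn cs2 * norm b2 \<le> A * (norm b * pn cs * norm b0)"
proof -
  have nb: "0 \<le> norm b" "0 \<le> norm b0" by auto
  consider "m = 0" "cs = []" | c cs' where "m = 0" "cs = c # cs'" | "m \<noteq> 0" "length cs < m"
    | "m \<noteq> 0" "length cs = m" | "m \<noteq> 0" "length cs > m"
    by (cases cs) force+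
  then show ?thesis
  proof cases
    case 1
    then have e: "cs2 = []" "b2 = b*(a0*b0)" using S by (auto simp: sV_def)
    have "norm (b*(a0*b0)) \<le> norm b * (norm a0 * norm b0)" by (rule nm2)
    also have "\<dots> \<le> norm b * (A * norm b0)" by (intro mult_left_mono mult_right_mono A) auto
    finally show ?thesis using 1 e by (simp add: algebra_simps)
  next
    case 2
    then have e: "cs2 = b*(a0*c) # cs'" "b2 = b0" using S by (auto simp: sV_def)
    have "norm (b*(a0*c)) \<le> norm b * (norm a0 * norm c)" by (rule nm2)
    also have "\<dots> \<le> norm b * (A * norm c)" by (intro mult_left_mono mult_right_mono A) auto
    finally have "norm (b*(a0*c)) * (pn cs' * norm b0) \<le> norm b * (A * norm c) * (pn cs' * norm b0)"
      by (intro mult_right_mono) (auto simp: pn_nonneg)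
    then show ?thesis using 2 e by (simp add: algebra_simps)
  next
    case 3
    then show ?thesis using S by (simp add: sV_def)
  next
    case 4
    then have e: "cs2 = []" "b2 = b*(am cs*b0)" using S by (auto simp: sV_def)
    have "norm (b*(am cs*b0)) \<le> norm b * (norm (am cs) * norm b0)" by (rule nm2)
    also have "\<dots> \<le> norm b * (A * pn cs * norm b0)" using A(3)[OF 4(1)] 4
      by (intro mult_left_mono mult_right_mono) auto
    finally show ?thesis using 4 e by (simp add: algebra_simps)
  next
    case 5
    then have e: "cs2 = b*(am (take m cs)*cs!m) # drop (Suc m) cs" "b2 = b0" using S by (auto simp: sV_def)
    have "norm (b*(am (take m cs)*cs!m)) \<le> norm b * (norm (am (take m cs)) * norm (cs!m))" by (rule nm2)
    also have "\<dots> \<le> norm b * (A * pn (take m cs) * norm (cs!m))" using A(3)[OF 5(1)] 5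
      by (intro mult_left_mono mult_right_mono) auto
    finally have "norm (b*(am (take m cs)*cs!m)) * (pn (drop (Suc m) cs) * norm b0)
        \<le> norm b * (A * pn (take m cs) * norm (cs!m)) * (pn (drop (Suc m) cs) * norm b0)"
      by (intro mult_right_mono) (auto simp: pn_nonneg)
    also have "\<dots> = A * (norm b * pn cs * norm b0)"
    proof -
      have pc: "pn cs = pn (take m cs) * (norm (cs!m) * pn (drop (Suc m) cs))"
        using 5 pn_take_drop[of m cs] pn_drop_Suc[of m cs] by simp
      show ?thesis unfolding pc by (simp add: algebra_simps)
    qed
    finally show ?thesis using 5 e by (simp add: algebra_simps)
  qed
qed

lemma grow_sW:
  fixes am :: "'b::real_normed_algebra_1 list \<Rightarrow> 'b"
  assumes A: "0 \<le> A" "norm a0 \<le> A" "m \<noteq> 0 \<Longrightarrow> \<forall>xs. length xs = m \<longrightarrow> norm (am xs) \<le> A * pn xs"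
    and S: "sW am m a0 b cs b0 = Some (cs2, b2)"
  shows "length cs2 \<le> Suc (length cs) \<and> pn cs2 * norm b2 \<le> A * (norm b * pn cs * norm b0)"
proof -
  consider "m = 0" | "m \<noteq> 0" "length cs < m" | "m \<noteq> 0" "length cs \<ge> m"
    by force
  then show ?thesis
  proof cases
    case 1
    then have e: "cs2 = b*a0 # cs" "b2 = b0" using S by (auto simp: sW_def)
    have "norm (b*a0) \<le> norm b * A" 
      by (meson A(2) mult_left_mono norm_ge_zero norm_mult_ineq order_trans)
    then have "norm (b*a0) * (pn cs * norm b0) \<le> norm b * A * (pn cs * norm b0)"
      by (intro mult_right_mono) (auto simp: pn_nonneg)
    then show ?thesis using 1 e by (simp add: algebra_simps)
  next
    case 2
    then show ?thesis using S by (simp add: sW_def)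
  next
    case 3
    then have e: "cs2 = b*am (take m cs) # drop m cs" "b2 = b0" using S by (auto simp: sW_def)
    have "norm (b*am (take m cs)) \<le> norm b * A * pn (take m cs)" using A(3)[OF 3(1)] 3
      by (metis (no_types, lifting) length_take min.absorb2 mult.assoc mult_left_mono norm_ge_zero
          norm_mult_ineq order_trans)
    then have "norm (b*am (take m cs)) * (pn (drop m cs) * norm b0) \<le> norm b * A * pn (take m cs) * (pn (drop m cs) * norm b0)"
      by (intro mult_right_mono) (auto simp: pn_nonneg)
    moreover have "pn cs = pn (take m cs) * pn (drop m cs)" by (simp add: pn_take_drop)
    ultimately show ?thesis using 3 e by (simp add: algebra_simps)
  qed
qed

lemma term_bound:
  fixes F :: "'b::real_normed_algebra_1 list \<times> 'b \<Rightarrow> 'b"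
  assumes FB: "\<And>cs b0. norm (F (cs,b0)) \<le> Kf (length cs) * P * pn cs * norm b0"
    and Kf: "\<And>s. 0 \<le> Kf s" and P: "0 \<le> P" and AQ: "0 \<le> A * Q"
    and G: "\<And>cs2 b2. S = Some (cs2, b2) \<Longrightarrow> length cs2 \<le> Suc s \<and> pn cs2 * norm b2 \<le> A * Q"
  shows "norm (ov F S) \<le> (\<Sum>s'\<le>Suc s. Kf s') * P * (A*Q)"
proof (cases S)
  case None
  have "0 \<le> (\<Sum>s'\<le>Suc s. Kf s')" by (simp add: Kf sum_nonneg)
  then show ?thesis using None P AQ by (simp add: ov_def)
next
  case (Some st)
  obtain cs2 b2 where st: "st = (cs2, b2)" by (cases st)
  have g: "length cs2 \<le> Suc s" "pn cs2 * norm b2 \<le> A * Q" using G Some st by auto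
  have k: "Kf (length cs2) \<le> (\<Sum>s'\<le>Suc s. Kf s')"
    by (rule member_le_sum) (use g Kf in auto)
  have "norm (ov F S) \<le> Kf (length cs2) * P * (pn cs2 * norm b2)"
    using FB[of cs2 b2] Some st by (simp add: ov_def mult.assoc)
  also have "\<dots> \<le> (\<Sum>s'\<le>Suc s. Kf s') * P * (A * Q)"
  proof (rule mult_mono[OF mult_right_mono[OF k P] g(2)])
    show "0 \<le> (\<Sum>s'\<le>Suc s. Kf s') * P" by (intro mult_nonneg_nonneg sum_nonneg Kf P)
    show "0 \<le> pn cs2 * norm b2" by (simp add: pn_nonneg)
  qed
  finally show ?thesis .
qed




lemma Val_bound:
  fixes \<alpha> :: "nat \<Rightarrow> 'b::real_normed_algebra_1 list \<Rightarrow> 'b"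
  assumes A: "0 \<le> A" "norm (\<alpha> 0 []) \<le> A"
    "\<forall>m. 1 \<le> m \<and> m \<le> N \<longrightarrow> (\<forall>xs. length xs = m \<longrightarrow> norm (\<alpha> m xs) \<le> A * pn xs)"
  shows "\<exists>K. (\<forall>s. 0 \<le> K s) \<and> (\<forall>w cs b0. length w = r \<longrightarrow>
            norm (Val \<alpha> N w (cs,b0)) \<le> K (length cs) * pn w * pn cs * norm b0)"
proof (induct r)
  case 0
  show ?case
    by (rule exI[of _ "\<lambda>_. 1"]) (auto simp: pn_nonneg)
next
  case (Suc r)
  then obtain Kf where Kf: "\<forall>s. 0 \<le> Kf s"
    and FB: "\<And>w cs b0. length w = r \<Longrightarrow> norm (Val \<alpha> N w (cs,b0)) \<le> Kf (length cs) * pn w * pn cs * norm b0"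
    by blast
  define K where "K s = 2 * real (Suc N) * (\<Sum>s'\<le>Suc s. Kf s') * A" for s
  have K0: "0 \<le> K s" for s unfolding K_def using Kf A by (intro mult_nonneg_nonneg sum_nonneg) auto
  have main: "norm (Val \<alpha> N w' (cs,b0)) \<le> K (length cs) * pn w' * pn cs * norm b0"
    if lw': "length w' = Suc r" for w' cs b0
  proof -
    obtain b w where w': "w' = b # w" and lw: "length w = r" using lw' by (cases w') auto
    define Q where "Q = norm b * pn cs * norm b0"
    define Ks where "Ks = (\<Sum>s'\<le>Suc (length cs). Kf s')"
    have Q0: "0 \<le> A * Q" unfolding Q_def using A by (intro mult_nonneg_nonneg) (auto simp: pn_nonneg)
    have mlA: "m \<noteq> 0 \<Longrightarrow> \<forall>xs. length xs = m \<longrightarrow> norm (\<alpha> m xs) \<le> A * pn xs" if "m < Suc N" for m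
      using A(3) that by auto
    have t1: "norm (ov (Val \<alpha> N w) (sV (\<alpha> m) m (\<alpha> 0 []) b cs b0)) \<le> Ks * pn w * (A * Q)"
      if "m < Suc N" for m unfolding Ks_def
      by (rule term_bound[OF FB[OF lw] _ pn_nonneg Q0]) (use Kf grow_sV[OF A(1,2) mlA[OF that]] in \<open>auto simp: Q_def\<close>)
    have t2: "norm (ov (Val \<alpha> N w) (sW (\<alpha> m) m (\<alpha> 0 []) b cs b0)) \<le> Ks * pn w * (A * Q)"
      if "m < Suc N" for m unfolding Ks_def
      by (rule term_bound[OF FB[OF lw] _ pn_nonneg Q0]) (use Kf grow_sW[OF A(1,2) mlA[OF that]] in \<open>auto simp: Q_def\<close>)
    have "norm (Val \<alpha> N w' (cs,b0)) \<le> (\<Sum>m<Suc N. norm (ov (Val \<alpha> N w) (sV (\<alpha> m) m (\<alpha> 0 []) b cs b0))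
         + norm (ov (Val \<alpha> N w) (sW (\<alpha> m) m (\<alpha> 0 []) b cs b0)))"
      unfolding w' Val.simps fst_conv snd_conv
      by (rule order_trans[OF norm_sum sum_mono]) (rule norm_triangle_ineq)
    also have "\<dots> \<le> (\<Sum>m<Suc N. 2 * (Ks * pn w * (A * Q)))"
      by (rule sum_mono) (use t1 t2 in force)
    also have "\<dots> = K (length cs) * pn w' * pn cs * norm b0"
      by (simp add: K_def Ks_def Q_def w' algebra_simps)
    finally show ?thesis .
  qed
  show ?case using K0 main by blast
qed




definition Dn :: "(nat \<Rightarrow> 'b::ring_1 list \<Rightarrow> 'b) \<Rightarrow> nat \<Rightarrow> 'b list \<Rightarrow> 'b list \<Rightarrow> 'b \<Rightarrow> 'b" where
"Dn \<alpha> n w cs b0 = (if length cs + length w = Suc n \<and> w \<noteq> []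
   then last w * (\<alpha> n (rev (map (\<lambda>b. b * \<alpha> 0 []) (butlast w)) @ cs) * b0) else 0)"

lemma Val_diff:
  fixes \<alpha> \<alpha>' :: "nat \<Rightarrow> 'b::ring_1 list \<Rightarrow> 'b"
  assumes n: "1 \<le> n" "n \<le> N" and agree: "\<forall>m<n. \<alpha>' m = \<alpha> m" and zero: "\<forall>m\<ge>n. \<alpha>' m = (\<lambda>_. 0)"
  shows "length cs + length w \<le> Suc n \<Longrightarrow> Val \<alpha> N w (cs,b0) = Val \<alpha>' N w (cs,b0) + Dn \<alpha> n w cs b0"
proof (induct w arbitrary: cs b0)
  case Nil
  then show ?case by (simp add: Dn_def)
next
  case (Cons b w)
  note IH = Cons(1)
  have len: "length cs + length w \<le> n" using Cons(2) by simp
  have IH0: "Val \<alpha> N w (cs',b0') = Val \<alpha>' N w (cs',b0')" if "length cs' \<le> length cs" for cs' b0'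
    using IH[of cs' b0'] that len by (simp add: Dn_def)
  have IH0': "Val \<alpha> N w s = Val \<alpha>' N w s" if "length (fst s) \<le> length cs" for s
    using IH0[of "fst s" "snd s"] that by simp
  have a0: "\<alpha>' 0 [] = \<alpha> 0 []" using agree n by auto
  define a0' where "a0' = \<alpha> 0 []"
  define T where "T \<beta> m = ov (Val \<beta> N w) (sV (\<beta> m) m (\<beta> 0 []) b cs b0) + ov (Val \<beta> N w) (sW (\<beta> m) m (\<beta> 0 []) b cs b0)"
    for \<beta> :: "nat \<Rightarrow> 'b list \<Rightarrow> 'b" and m
  have ovc: "ov (Val \<alpha> N w) S = ov (Val \<alpha>' N w) S" if "\<And>s. S = Some s \<Longrightarrow> length (fst s) \<le> length cs" for S
    using that IH0' by (cases S) (auto simp: ov_def)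
  have Tm: "T \<alpha> m = T \<alpha>' m + (if m = 0 then Dn \<alpha> n w (b*a0' # cs) b0 else 0)
       + (if m = n \<and> length cs = n then b*(\<alpha> n cs * b0) else 0)" for m
  proof -
    consider "m = 0" | "0 < m" "m < n" | "m = n" | "n < m" by linarith
    then show ?thesis
    proof cases
      case 1
      have v: "ov (Val \<alpha> N w) (sV (\<alpha> 0) 0 a0' b cs b0) = ov (Val \<alpha>' N w) (sV (\<alpha> 0) 0 a0' b cs b0)"
        by (rule ovc) (auto simp: sV_def split: list.splits)
      have w: "Val \<alpha> N w (b*a0' # cs, b0) = Val \<alpha>' N w (b*a0' # cs, b0) + Dn \<alpha> n w (b*a0' # cs) b0"
        by (rule IH) (use Cons(2) in simp)
      show ?thesis using 1 n v w a0 agree by (simp add: T_def sW_def ov_def a0'_def)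
    next
      case 2
      have am: "\<alpha>' m = \<alpha> m" using agree 2 by auto
      have v: "ov (Val \<alpha> N w) (sV (\<alpha> m) m a0' b cs b0) = ov (Val \<alpha>' N w) (sV (\<alpha> m) m a0' b cs b0)"
        by (rule ovc) (use 2 in \<open>auto simp: sV_def split: if_splits\<close>)
      have w: "ov (Val \<alpha> N w) (sW (\<alpha> m) m a0' b cs b0) = ov (Val \<alpha>' N w) (sW (\<alpha> m) m a0' b cs b0)"
        by (rule ovc) (use 2 in \<open>auto simp: sW_def split: if_splits\<close>)
      show ?thesis using 2 v w a0 am by (simp add: T_def a0'_def)
    next
      case 3
      show ?thesis
      proof (cases "length cs = n")
        case True
        then have "w = []" using len by simp
        then show ?thesis using 3 True n zero by (simp add: T_def sV_def sW_def ov_def)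
      next
        case False
        then have "length cs < n" using len by simp
        then show ?thesis using 3 n by (simp add: T_def sV_def sW_def ov_def)
      qed
    next
      case 4
      then show ?thesis using len by (simp add: T_def sV_def sW_def ov_def)
    qed
  qed
  have "Val \<alpha> N (b#w) (cs,b0) = (\<Sum>m<Suc N. T \<alpha> m)" by (simp add: T_def)
  also have "\<dots> = (\<Sum>m<Suc N. T \<alpha>' m) + (\<Sum>m<Suc N. (if m = 0 then Dn \<alpha> n w (b*a0' # cs) b0 else 0))
       + (\<Sum>m<Suc N. (if m = n \<and> length cs = n then b*(\<alpha> n cs * b0) else 0))"
    by (simp add: Tm sum.distrib)
  also have "\<dots> = Val \<alpha>' N (b#w) (cs,b0) + Dn \<alpha> n w (b*a0' # cs) b0
       + (if length cs = n then b*(\<alpha> n cs * b0) else 0)"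
    using n by (simp add: T_def a0 sum.If_cases)
  also have "\<dots> = Val \<alpha>' N (b#w) (cs,b0) + Dn \<alpha> n (b#w) cs b0"
  proof -
    have "Dn \<alpha> n w (b*a0' # cs) b0 + (if length cs = n then b*(\<alpha> n cs * b0) else 0) = Dn \<alpha> n (b#w) cs b0"
    proof (cases "length cs = n")
      case True
      then have "w = []" using len by simp
      then show ?thesis using True by (simp add: Dn_def)
    next
      case False
      then show ?thesis using len by (cases "w = []") (auto simp: Dn_def a0'_def)
    qed
    then show ?thesis by (simp add: add.assoc)
  qed
  finally show ?case .
qed




primrec beta :: "nat \<Rightarrow> ('b::ring_1 list \<Rightarrow> 'b) \<Rightarrow> 'b \<Rightarrow> 'b \<Rightarrow> nat \<Rightarrow> (nat \<Rightarrow> 'b list \<Rightarrow> 'b)" where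
  "beta N core ainv a0 0 = (\<lambda>m. if m = 0 then (\<lambda>_. a0) else (\<lambda>_. 0))"
| "beta N core ainv a0 (Suc k) = (beta N core ainv a0 k)(Suc k :=
     (\<lambda>cs. core cs - Val (beta N core ainv a0 k) N (rev (1 # map (\<lambda>c. c*ainv) cs)) ([],1)))"

lemma beta_low: "m \<le> k \<Longrightarrow> beta N core ainv a0 k m = beta N core ainv a0 m m"
  by (induct k) (auto simp: le_Suc_eq)

lemma beta_high: "k < m \<Longrightarrow> beta N core ainv a0 k m = (\<lambda>_. 0)"
  by (induct k) auto

lemma beta_0: "beta N core ainv a0 k 0 = (\<lambda>_. a0)"
  by (induct k) auto

lemma pn_append: "pn (xs @ ys) = pn xs * pn ys"
  by (simp add: pn_def)

lemma clin_diff: "clin j f \<Longrightarrow> clin j g \<Longrightarrow> clin j (\<lambda>x. f x - g x)"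
  by (simp add: clin_def algebra_simps scaleR_diff_right)

lemma bml_of_clin:
  assumes "\<And>xs k. length xs = n \<Longrightarrow> k < n \<Longrightarrow> clin j (\<lambda>x. f (xs[k:=x]))"
    and "\<exists>K. \<forall>xs. length xs = n \<longrightarrow> norm (f xs) \<le> K * pn xs"
  shows "bounded_multilinear_map j n f"
  using assms unfolding bounded_multilinear_map_def clin_def pn_def by blast

lemma bml_bound: "bounded_multilinear_map j n f \<Longrightarrow> \<exists>K. \<forall>xs. length xs = n \<longrightarrow> norm (f xs) \<le> K * pn xs"
  unfolding bounded_multilinear_map_def pn_def by blast

lemma family_bound:
  fixes \<gamma> :: "nat \<Rightarrow> 'b::{real_normed_algebra_1,banach} list \<Rightarrow> 'b"
  assumes "\<forall>m. 1 \<le> m \<and> m \<le> N \<longrightarrow> bounded_multilinear_map j m (\<gamma> m)"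
  shows "\<exists>A. 0 \<le> A \<and> norm (\<gamma> 0 []) \<le> A \<and>
    (\<forall>m. 1 \<le> m \<and> m \<le> N \<longrightarrow> (\<forall>xs. length xs = m \<longrightarrow> norm (\<gamma> m xs) \<le> A * pn xs))"
proof -
  have "\<forall>m. \<exists>K. 1 \<le> m \<and> m \<le> N \<longrightarrow> (\<forall>xs. length xs = m \<longrightarrow> norm (\<gamma> m xs) \<le> K * pn xs)"
    using assms bml_bound by metis
  then obtain KA where KA: "\<And>m xs. 1 \<le> m \<Longrightarrow> m \<le> N \<Longrightarrow> length xs = m \<Longrightarrow> norm (\<gamma> m xs) \<le> KA m * pn xs"
    by metis
  define A where "A = norm (\<gamma> 0 []) + (\<Sum>m\<le>N. \<bar>KA m\<bar>)"
  have A0: "0 \<le> A" unfolding A_def by (simp add: sum_nonneg)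
  have "norm (\<gamma> 0 []) \<le> A" unfolding A_def by (simp add: sum_nonneg)
  moreover have "norm (\<gamma> m xs) \<le> A * pn xs" if "1 \<le> m" "m \<le> N" "length xs = m" for m xs
  proof -
    have "\<bar>KA m\<bar> \<le> (\<Sum>m\<le>N. \<bar>KA m\<bar>)" by (rule member_le_sum) (use that in auto)
    then have "\<bar>KA m\<bar> \<le> A" unfolding A_def using norm_ge_zero[of "\<gamma> 0 []"] by linarith
    then have "KA m * pn xs \<le> A * pn xs" by (intro mult_right_mono) (auto simp: pn_nonneg)
    then show ?thesis using KA[OF that] by linarith
  qed
  ultimately show ?thesis using A0 by blast
qed

lemma pn_map_mult: "pn (map (\<lambda>c. c * d) xs) \<le> norm (d::'b::real_normed_algebra_1) ^ length xs * pn xs"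
proof (induct xs)
  case Nil then show ?case by simp
next
  case (Cons x xs)
  have "norm (x*d) * pn (map (\<lambda>c. c * d) xs) \<le> (norm x * norm d) * (norm d ^ length xs * pn xs)"
    by (intro mult_mono Cons norm_mult_ineq) (auto simp: pn_nonneg)
  then show ?case by (simp add: algebra_simps)
qed

lemma newf_Val_bml:
  fixes \<gamma> :: "nat \<Rightarrow> 'b::{real_normed_algebra_1,banach} list \<Rightarrow> 'b"
  assumes jc: "\<forall>x. j*x = x*j"
    and ml: "\<forall>m. 1 \<le> m \<and> m \<le> N \<longrightarrow> bounded_multilinear_map j m (\<gamma> m)"
  shows "bounded_multilinear_map j n (\<lambda>cs. Val \<gamma> N (rev (1 # map (\<lambda>c. c*ainv) cs)) ([],1))"
proof (rule bml_of_clin)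
  fix xs :: "'b list" and k assume xs: "length xs = n" "k < n"
  have e: "rev (1 # map (\<lambda>c. c*ainv) (xs[k:=x])) = (rev (1 # map (\<lambda>c. c*ainv) xs))[n - k - 1 := x * ainv]" for x
  proof -
    have "1 # map (\<lambda>c. c*ainv) (xs[k:=x]) = (1 # map (\<lambda>c. c*ainv) xs)[Suc k := x * ainv]"
      by (simp add: map_update)
    then show ?thesis using xs by (simp add: rev_update list_update_append)
  qed
  show "clin j (\<lambda>x. Val \<gamma> N (rev (1 # map (\<lambda>c. c*ainv) (xs[k:=x]))) ([],1))"
    unfolding e by (rule Val_clin_w[OF jc ml]) (use xs in \<open>auto intro: clin_r clin_id\<close>)
next
  obtain A where A: "0 \<le> A" "norm (\<gamma> 0 []) \<le> A"
    "\<forall>m. 1 \<le> m \<and> m \<le> N \<longrightarrow> (\<forall>xs. length xs = m \<longrightarrow> norm (\<gamma> m xs) \<le> A * pn xs)"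
    using family_bound[OF ml] by blast
  obtain K where K: "\<forall>s. 0 \<le> K s" "\<forall>w cs b0. length w = Suc n \<longrightarrow>
            norm (Val \<gamma> N w (cs,b0)) \<le> K (length cs) * pn w * pn cs * norm b0"
    using Val_bound[OF A, of "Suc n"] by blast
  have "norm (Val \<gamma> N (rev (1 # map (\<lambda>c. c*ainv) xs)) ([],1)) \<le> (K 0 * norm ainv ^ n) * pn xs"
    if xs: "length xs = n" for xs
  proof -
  have "norm (Val \<gamma> N (rev (1 # map (\<lambda>c. c*ainv) xs)) ([],1)) \<le> K 0 * pn (map (\<lambda>c. c*ainv) xs)"
    using K(2)[rule_format, of "rev (1 # map (\<lambda>c. c*ainv) xs)" "[]" 1] xs by (simp add: pn_rev pn_append)
  also have "\<dots> \<le> K 0 * (norm ainv ^ n * pn xs)"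
    using pn_map_mult[of ainv xs] xs K(1) by (simp add: mult_left_mono)
  finally show ?thesis
    by (simp add: mult.assoc)
  qed
  then show "\<exists>K. \<forall>xs. length xs = n \<longrightarrow> norm (Val \<gamma> N (rev (1 # map (\<lambda>c. c*ainv) xs)) ([],1)) \<le> K * pn xs"
    by blast
qed

lemma bml_diff:
  assumes "bounded_multilinear_map j n f" "bounded_multilinear_map j n g"
  shows "bounded_multilinear_map j n (\<lambda>xs. f xs - g xs)"
proof (rule bml_of_clin)
  fix xs :: "'a list" and k assume "length xs = n" "k < n"
  then show "clin j (\<lambda>x. f (xs[k := x]) - g (xs[k := x]))"
    using clin_diff bml_clin assms by blast
next
  obtain K1 K2 where K: "\<forall>xs. length xs = n \<longrightarrow> norm (f xs) \<le> K1 * pn xs"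
     "\<forall>xs. length xs = n \<longrightarrow> norm (g xs) \<le> K2 * pn xs"
    using bml_bound assms by metis
  have "norm (f xs - g xs) \<le> (K1 + K2) * pn xs" if "length xs = n" for xs
    using K norm_triangle_ineq4[of "f xs" "g xs"] that by (simp add: distrib_right) (smt (verit))
  then show "\<exists>K. \<forall>xs. length xs = n \<longrightarrow> norm (f xs - g xs) \<le> K * pn xs" by blast
qed

lemma bml_zero: "bounded_multilinear_map j n (\<lambda>_. 0)"
  by (rule bml_of_clin) (auto simp: clin_0 intro: exI[of _ 0])




lemma alg_word_append: "alg_word \<iota> a (xs @ ys) = alg_word \<iota> a xs * alg_word \<iota> a ys"
  by (induct xs) (auto simp: alg_word_def mult.assoc)

lemma alg_word_Cons: "alg_word \<iota> a (b # xs) = \<iota> b * a * alg_word \<iota> a xs"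
  by (simp add: alg_word_def)

lemma alg_word_update:
  "k < length L \<Longrightarrow> alg_word \<iota> a (L[k:=y]) = alg_word \<iota> a (take k L) * \<iota> y * (a * alg_word \<iota> a (drop (Suc k) L))"
  by (simp add: upd_conv_take_nth_drop alg_word_append alg_word_Cons mult.assoc)

lemma alg_word_bound:
  fixes \<iota> :: "'b::real_normed_algebra_1 \<Rightarrow> 'a::real_normed_algebra_1"
  assumes iso: "\<forall>b. norm (\<iota> b) = norm b"
  shows "norm (alg_word \<iota> a L) \<le> pn L * norm a ^ length L"
proof (induct L)
  case Nil then show ?case by (simp add: alg_word_def)
next
  case (Cons b L)
  have "norm (\<iota> b * a * alg_word \<iota> a L) \<le> norm (\<iota> b * a) * norm (alg_word \<iota> a L)"
    by (rule norm_mult_ineq)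
  also have "\<dots> \<le> (norm b * norm a) * (pn L * norm a ^ length L)"
    using iso norm_mult_ineq[of "\<iota> b" a] by (intro mult_mono Cons) auto
  finally show ?case by (simp add: alg_word_Cons algebra_simps)
qed

lemma E_clin:
  assumes nc: "banach_ncps j \<iota> E"
  shows "clin j (\<lambda>y. E (P * \<iota> y * Q))"
proof -
  have i: "bounded_linear \<iota>" and e: "bounded_linear E" and hom: "\<forall>x y. \<iota> (x * y) = \<iota> x * \<iota> y"
    and i1: "\<iota> 1 = 1" and bm: "\<forall>b1 x b2. E (\<iota> b1 * x * \<iota> b2) = b1 * E x * b2"
    and cj: "complex_structure (\<iota> j)"
    using nc by (auto simp: banach_ncps_def)
  have c: "\<iota> j * x = x * \<iota> j" for x using cj by (simp add: complex_structure_def)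
  interpret i: bounded_linear \<iota> by (rule i)
  interpret e: bounded_linear E by (rule e)
  have "E (P * \<iota> (j*y) * Q) = j * E (P * \<iota> y * Q)" for y
  proof -
    have "P * \<iota> (j*y) * Q = \<iota> j * (P * \<iota> y * Q) * \<iota> 1"
      using hom c i1 by (simp add: mult.assoc)
    then show ?thesis using bm by simp
  qed
  then show ?thesis
    by (simp add: clin_def i.add e.add i.scaleR e.scaleR distrib_left distrib_right)
qed

lemma core_bml:
  fixes \<iota> :: "'b::{real_normed_algebra_1,banach} \<Rightarrow> 'a::{real_normed_algebra_1,banach}"
  assumes nc: "banach_ncps j \<iota> E"
  shows "bounded_multilinear_map j n (\<lambda>cs. E (alg_word \<iota> a (1 # map (\<lambda>c. c*ainv) cs)))"
proof (rule bml_of_clin)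
  fix xs :: "'b list" and k assume xs: "length xs = n" "k < n"
  let ?L = "1 # map (\<lambda>c. c*ainv) xs"
  have "E (alg_word \<iota> a (1 # map (\<lambda>c. c*ainv) (xs[k:=x])))
      = E (alg_word \<iota> a (take (Suc k) ?L) * \<iota> (x*ainv) * (a * alg_word \<iota> a (drop (Suc (Suc k)) ?L)))" for x
  proof -
    have "1 # map (\<lambda>c. c*ainv) (xs[k:=x]) = ?L[Suc k := x*ainv]" by (simp add: map_update)
    then show ?thesis using alg_word_update[of "Suc k" ?L \<iota> a "x*ainv"] xs by simp
  qed
  then show "clin j (\<lambda>x. E (alg_word \<iota> a (1 # map (\<lambda>c. c*ainv) (xs[k:=x]))))"
    by (simp only:) (rule clin_comp[OF E_clin[OF nc] clin_r[OF clin_id]])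
next
  have iso: "\<forall>b. norm (\<iota> b) = norm b" and e: "bounded_linear E"
    using nc by (auto simp: banach_ncps_def)
  obtain KE where KE: "\<And>x. norm (E x) \<le> norm x * KE"
    using bounded_linear.bounded[OF e] by blast
  have "norm (E (alg_word \<iota> a (1 # map (\<lambda>c. c*ainv) xs))) \<le> (\<bar>KE\<bar> * norm a ^ Suc n * norm ainv ^ n) * pn xs"
    if xs: "length xs = n" for xs
  proof -
    let ?L = "1 # map (\<lambda>c. c*ainv) xs"
    have "norm (E (alg_word \<iota> a ?L)) \<le> norm (alg_word \<iota> a ?L) * \<bar>KE\<bar>"
      using KE[of "alg_word \<iota> a ?L"] by (smt (verit) mult_left_mono norm_ge_zero)
    also have "\<dots> \<le> (pn ?L * norm a ^ length ?L) * \<bar>KE\<bar>"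
      by (intro mult_right_mono alg_word_bound iso) auto
    also have "\<dots> = pn (map (\<lambda>c. c*ainv) xs) * (norm a ^ Suc n * \<bar>KE\<bar>)"
      using xs by simp
    also have "\<dots> \<le> (norm ainv ^ n * pn xs) * (norm a ^ Suc n * \<bar>KE\<bar>)"
      using pn_map_mult[of ainv xs] xs by (intro mult_right_mono) auto
    finally show ?thesis by (simp add: algebra_simps)
  qed
  then show "\<exists>K. \<forall>xs. length xs = n \<longrightarrow> norm (E (alg_word \<iota> a (1 # map (\<lambda>c. c*ainv) xs))) \<le> K * pn xs"
    by blast
qed




theorem mainTheorem9:
  fixes j :: "'b::{real_normed_algebra_1,banach}"
    and \<iota> :: "'b \<Rightarrow> 'a::{real_normed_algebra_1,banach}"
    and E :: "'a \<Rightarrow> 'b" and a :: 'a and N :: nat and i :: 'i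
  assumes "banach_ncps j \<iota> E"
    and "invertible_elem (E a)"
    and "N \<ge> 1"
  shows "\<exists>\<alpha> :: nat \<Rightarrow> 'b list \<Rightarrow> 'b.
           \<alpha> 0 [] = E a \<and>
           (\<forall>n\<in>{1..N}. bounded_multilinear_map j n (\<alpha> n)) \<and>
           (\<forall>bs. 2 \<le> length bs \<and> length bs \<le> N + 1 \<longrightarrow>
              fockE_word i N \<alpha> bs = E (alg_word \<iota> a bs))"
proof -
  note nc = assms(1)
  have jc: "\<forall>x. j*x = x*j" using nc by (simp add: banach_ncps_def complex_structure_def)
  have i1: "\<iota> 1 = 1" and bm: "\<forall>b1 x b2. E (\<iota> b1 * x * \<iota> b2) = b1 * E x * b2"
    using nc by (auto simp: banach_ncps_def)
  obtain ainv where ainv: "E a * ainv = 1" "ainv * E a = 1"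
    using assms(2) by (auto simp: invertible_elem_def)
  define core where "core = (\<lambda>cs. E (alg_word \<iota> a (1 # map (\<lambda>c. c*ainv) cs)))"
  define B where "B = beta N core ainv (E a)"
  have BS: "B (Suc k) = (B k)(Suc k := (\<lambda>cs. core cs - Val (B k) N (rev (1 # map (\<lambda>c. c*ainv) cs)) ([],1)))" for k
    by (simp add: B_def)
  have Bml: "\<forall>m. 1 \<le> m \<and> m \<le> N \<longrightarrow> bounded_multilinear_map j m (B k m)" for k
  proof (induct k)
    case 0
    then show ?case by (auto simp: B_def bml_zero)
  next
    case (Suc k)
    show ?case
    proof (intro allI impI)
      fix m assume m: "1 \<le> m \<and> m \<le> N"
      show "bounded_multilinear_map j m (B (Suc k) m)"
      proof (cases "m = Suc k")
        case True
        then show ?thesis unfolding BS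
          using bml_diff[OF core_bml[OF nc] newf_Val_bml[OF jc Suc]] by (simp add: core_def)
      next
        case False
        then show ?thesis unfolding BS using Suc m by simp
      qed
    qed
  qed
  define \<alpha> where "\<alpha> = B N"
  have a0: "\<alpha> 0 [] = E a" by (simp add: \<alpha>_def B_def beta_0)
  have mom: "fockE_word i N \<alpha> bs = E (alg_word \<iota> a bs)"
    if bs: "2 \<le> length bs" "length bs \<le> N + 1" for bs
  proof -
    obtain b0 rest where bs0: "bs = b0 # rest" using bs by (cases bs) auto
    define n where "n = length rest"
    have n: "1 \<le> n" "n \<le> N" using bs bs0 n_def by auto
    have agree: "\<forall>m<n. B (n-1) m = \<alpha> m"
    proof (intro allI impI)
      fix m assume m: "m < n"
      have "B (n-1) m = B m m" unfolding B_def by (rule beta_low) (use m in simp)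
      moreover have "\<alpha> m = B m m" unfolding \<alpha>_def B_def by (rule beta_low) (use m n in simp)
      ultimately show "B (n-1) m = \<alpha> m" by simp
    qed
    have zero: "\<forall>m\<ge>n. B (n-1) m = (\<lambda>_. 0)"
    proof (intro allI impI)
      fix m assume m: "n \<le> m"
      show "B (n-1) m = (\<lambda>_. 0)" unfolding B_def by (rule beta_high) (use m n in simp)
    qed
    have h1: "fockE_word i N \<alpha> bs = Val \<alpha> N (rev bs) ([],1)" by (rule bridge)
    have h2: "Val \<alpha> N (rev bs) ([],1) = Val (B (n-1)) N (rev bs) ([],1) + Dn \<alpha> n (rev bs) [] 1"
      by (rule Val_diff[OF n agree zero]) (simp add: bs0 n_def)
    have h3: "Dn \<alpha> n (rev bs) [] 1 = b0 * \<alpha> n (map (\<lambda>b. b * E a) rest)"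
      by (simp add: Dn_def bs0 n_def a0 rev_map)
    have h4: "\<alpha> n = B (Suc (n-1)) (Suc (n-1))"
      proof -
      have "\<alpha> n = B n n" unfolding \<alpha>_def B_def by (rule beta_low) (use n in simp)
      moreover have "Suc (n-1) = n" using n by simp
      ultimately show ?thesis by simp
    qed
    have h5: "B (Suc (n-1)) (Suc (n-1)) (map (\<lambda>b. b * E a) rest) = core (map (\<lambda>b. b * E a) rest) - Val (B (n-1)) N (rev (1 # rest)) ([],1)"
      by (simp add: BS o_def mult.assoc ainv)
    have h6: "core (map (\<lambda>b. b * E a) rest) = E (a * alg_word \<iota> a rest)"
      by (simp add: core_def o_def mult.assoc ainv alg_word_Cons i1)
    have h7: "Val (B (n-1)) N (rev bs) ([],1) = b0 * Val (B (n-1)) N (rev (1 # rest)) ([],1)"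
      using Val_last[of "B (n-1)" N "rev rest" b0 "([],1)"] by (simp add: bs0)
    have h8: "E (alg_word \<iota> a bs) = b0 * E (a * alg_word \<iota> a rest)"
      using bm[rule_format, of b0 "a * alg_word \<iota> a rest" 1] by (simp add: bs0 alg_word_Cons i1 mult.assoc)
    show ?thesis unfolding h1 h2 h3 h4 h5 h6 h7 h8 by (simp add: algebra_simps)
  qed
  show ?thesis
    by (rule exI[of _ \<alpha>]) (use a0 Bml mom in \<open>auto simp: \<alpha>_def\<close>)
qed


end
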